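(* Let $T,M,\delta,\tau$ be as in the setup, let $\rho^*=\mathrm{OPT}$, and let $\zeta\ge 0$. Let $\mathcal{H}$ be the family of all $k$-element subsets $U\subseteq V_T$ with $\mathcal{S}_U\neq\emptyset$. Build the directed flow network $Z$ with vertex set $\{s\}\cup\{x_U:U\in\mathcal{H}\}\cup V_T\cup\{z\}$ and arcs: $(s,x_U)$ with capacity $\tau(U)$ for each $U\in\mathcal{H}$; $(x_U,v)$ with capacity $+\infty$ for each $U\in\mathcal{H}$ and $v\in U$; $(v,z)$ with capacity $\zeta$ for each $v\in V_T$. Let $(\mathsf{S},\mathsf{Z})$ be a minimum $s$–$z$ cut of $Z$ (a partition of its vertices with $s\in\mathsf{S}$, $z\in\mathsf{Z}$ minimizing the total capacity of arcs from $\mathsf{S}$ to $\mathsf{Z}$). If $\mathsf{S}\cap V_T\neq\emptyset$ then $\zeta\le\rho^*$; otherwise $\zeta\ge\rho^*$.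
   Context: Setup. A temporal network is a pair $T=(V_T,E_T)$ where $V_T$ is a finite set of $n$ vertices and $E_T$ is a finite set of temporal edges $(u,v,t)$ with $u,v\in V_T$ and timestamp $t\in\mathbb{R}_{>0}$; timestamps are assumed distinct. A $k$-vertex $\ell$-edge temporal motif ($k,\ell\ge 2$) is a pair $M=(K,\sigma)$ where $K=(V_K,E_K)$ is a directed, weakly connected multigraph with $|V_K|=k$, $|E_K|=\ell$, and $\sigma$ is an ordering of $E_K$; equivalently $M$ is the sequence $\langle(x_1,y_1),\dots,(x_\ell,y_\ell)\rangle$ of its edges in the order $\sigma$. Given $\delta>0$, a $\delta$-instance of $M$ in a temporal network is a sequence $S=\langle(x'_1,y'_1,t'_1),\dots,(x'_\ell,y'_\ell,t'_\ell)\rangle$ of $\ell$ distinct temporal edges of that network with $t'_1<\dots<t'_\ell$ such that (1) there is a bijection $h$ from the set of vertices appearing in $S$ onto $V_K$ with $h(x'_i)=x_i$ and $h(y'_i)=y_i$ for all $i\in[\ell]$, and (2) $t'_\ell-t'_1\le\delta$. We write $v\in S$ if $v$ is an endpoint of some edge of $S$; every $\delta$-instance contains exactly $k$ vertices. For $W\subseteq V_T$, $T[W]=(W,\{(u,v,t)\in E_T:u,v\in W\})$ is the induced temporal subnetwork and $\mathcal{S}_W$ is the set of $\delta$-instances of $M$ in $T[W]$. A weighting function $\tau$ assigns a weight $\tau(S)>0$ to each $\delta$-instance $S$ of $M$ in $T$; for $W\subseteq V_T$, $\tau(W)=\sum_{S\in\mathcal{S}_W}\tau(S)$. The temporal motif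 degree of $v$ in $T[W]$ is $C_W(v)=\sum_{S\in\mathcal{S}_W:\,v\in S}\tau(S)$. The density of a nonempty $W\subseteq V_T$ is $\rho(W)=\tau(W)/|W|$, and $\mathrm{OPT}=\max_{\emptyset\ne W\subseteq V_T}\rho(W)$ is the optimal value of the Temporal Motif Densest Subnetwork (TMDS) problem. *)

theory Defs
  imports Complex_Main "HOL-Library.Extended_Real"
begin

type_synonym 'v tedge = "'v \<times> 'v \<times> real"

definition temporal_network :: "'v set \<Rightarrow> 'v tedge set \<Rightarrow> bool" where
  "temporal_network V E \<longleftrightarrow> finite V \<and> finite E \<and>
     (\<forall>(u,v,t)\<in>E. u \<in> V \<and> v \<in> V \<and> t > 0) \<and>
     (\<forall>e1\<in>E. \<forall>e2\<in>E. snd (snd e1) = snd (snd e2) \<longrightarrow> e1 = e2)"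

text \<open>A motif is the list of its edges in the order sigma; its vertex set V_K.\<close>
definition motif_vertices :: "('m \<times> 'm) list \<Rightarrow> 'm set" where
  "motif_vertices M = fst ` set M \<union> snd ` set M"

definition weakly_connected_motif :: "('m \<times> 'm) list \<Rightarrow> bool" where
  "weakly_connected_motif M \<longleftrightarrow>
     (\<forall>a\<in>motif_vertices M. \<forall>b\<in>motif_vertices M.
        (a, b) \<in> (set M \<union> (set M)\<inverse>)\<^sup>*)"

definition temporal_motif :: "('m \<times> 'm) list \<Rightarrow> nat \<Rightarrow> nat \<Rightarrow> bool" where
  "temporal_motif M k l \<longleftrightarrow> k \<ge> 2 \<and> l \<ge> 2 \<and> length M = l \<and>
     card (motif_vertices M) = k \<and> weakly_connected_motif M"

definition inst_vertices :: "'v tedge list \<Rightarrow> 'v set" where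
  "inst_vertices S = (\<lambda>e. fst e) ` set S \<union> (\<lambda>e. fst (snd e)) ` set S"

definition induced_edges :: "'v tedge set \<Rightarrow> 'v set \<Rightarrow> 'v tedge set" where
  "induced_edges E W = {(u,v,t) \<in> E. u \<in> W \<and> v \<in> W}"

definition is_delta_instance :: "'v tedge set \<Rightarrow> ('m \<times> 'm) list \<Rightarrow> real \<Rightarrow> 'v tedge list \<Rightarrow> bool" where
  "is_delta_instance E' M \<delta> S \<longleftrightarrow>
     length S = length M \<and> distinct S \<and> set S \<subseteq> E' \<and>
     sorted_wrt (\<lambda>e1 e2. snd (snd e1) < snd (snd e2)) S \<and>
     (\<exists>h. bij_betw h (inst_vertices S) (motif_vertices M) \<and>
        (\<forall>i<length S. h (fst (S!i)) = fst (M!i) \<and> h (fst (snd (S!i))) = snd (M!i))) \<and>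
     snd (snd (last S)) - snd (snd (hd S)) \<le> \<delta>"

definition instances :: "'v tedge set \<Rightarrow> ('m \<times> 'm) list \<Rightarrow> real \<Rightarrow> 'v set \<Rightarrow> 'v tedge list set" where
  "instances E M \<delta> W = {S. is_delta_instance (induced_edges E W) M \<delta> S}"

definition tau_set :: "'v tedge set \<Rightarrow> ('m \<times> 'm) list \<Rightarrow> real \<Rightarrow> ('v tedge list \<Rightarrow> real) \<Rightarrow> 'v set \<Rightarrow> real" where
  "tau_set E M \<delta> \<tau> W = (\<Sum>S\<in>instances E M \<delta> W. \<tau> S)"

definition density :: "'v tedge set \<Rightarrow> ('m \<times> 'm) list \<Rightarrow> real \<Rightarrow> ('v tedge list \<Rightarrow> real) \<Rightarrow> 'v set \<Rightarrow> real" where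
  "density E M \<delta> \<tau> W = tau_set E M \<delta> \<tau> W / real (card W)"

definition OPT :: "'v set \<Rightarrow> 'v tedge set \<Rightarrow> ('m \<times> 'm) list \<Rightarrow> real \<Rightarrow> ('v tedge list \<Rightarrow> real) \<Rightarrow> real" where
  "OPT V E M \<delta> \<tau> = Max {density E M \<delta> \<tau> W | W. W \<subseteq> V \<and> W \<noteq> {}}"

definition H_family :: "'v set \<Rightarrow> 'v tedge set \<Rightarrow> ('m \<times> 'm) list \<Rightarrow> real \<Rightarrow> nat \<Rightarrow> 'v set set" where
  "H_family V E M \<delta> k = {U. U \<subseteq> V \<and> card U = k \<and> instances E M \<delta> U \<noteq> {}}"

datatype 'v znode = Src | Sink | XU "'v set" | Vt 'v

definition Z_nodes :: "'v set \<Rightarrow> 'v set set \<Rightarrow> 'v znode set" where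
  "Z_nodes V H = {Src, Sink} \<union> XU ` H \<union> Vt ` V"

definition Z_arcs :: "'v set \<Rightarrow> 'v set set \<Rightarrow> ('v znode \<times> 'v znode) set" where
  "Z_arcs V H = {(Src, XU U) | U. U \<in> H} \<union> {(XU U, Vt v) | U v. U \<in> H \<and> v \<in> U}
                \<union> {(Vt v, Sink) | v. v \<in> V}"

text \<open>Capacities (only meaningful on arcs).\<close>
fun Z_cap :: "('v set \<Rightarrow> real) \<Rightarrow> real \<Rightarrow> 'v znode \<times> 'v znode \<Rightarrow> ereal" where
  "Z_cap tw \<zeta> (Src, XU U) = ereal (tw U)"
| "Z_cap tw \<zeta> (XU U, Vt v) = \<infinity>"
| "Z_cap tw \<zeta> (Vt v, Sink) = ereal \<zeta>"
| "Z_cap tw \<zeta> _ = 0"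

definition is_sz_cut :: "'v znode set \<Rightarrow> 'v znode set \<Rightarrow> bool" where
  "is_sz_cut N C \<longleftrightarrow> C \<subseteq> N \<and> Src \<in> C \<and> Sink \<notin> C"

definition cut_capacity :: "'v znode set \<Rightarrow> ('v znode \<times> 'v znode) set \<Rightarrow>
    ('v znode \<times> 'v znode \<Rightarrow> ereal) \<Rightarrow> 'v znode set \<Rightarrow> ereal" where
  "cut_capacity N A cap C = (\<Sum>a\<in>A \<inter> (C \<times> (N - C)). cap a)"

definition is_min_cut :: "'v znode set \<Rightarrow> ('v znode \<times> 'v znode) set \<Rightarrow>
    ('v znode \<times> 'v znode \<Rightarrow> ereal) \<Rightarrow> 'v znode set \<Rightarrow> bool" where
  "is_min_cut N A cap C \<longleftrightarrow> is_sz_cut N C \<and>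
     (\<forall>C'. is_sz_cut N C' \<longrightarrow> cut_capacity N A cap C \<le> cut_capacity N A cap C')"

end

theory Submission
  imports Defs
begin


lemma inst_sub_E: "S \<in> instances E M \<delta> W \<Longrightarrow> set S \<subseteq> E"
  by (auto simp: instances_def is_delta_instance_def induced_edges_def)

lemma inst_finite: "finite E \<Longrightarrow> finite (instances E M \<delta> W)"
proof -
  assume f: "finite E"
  have "instances E M \<delta> W \<subseteq> {xs. set xs \<subseteq> E \<and> length xs = length M}"
    by (auto simp: instances_def is_delta_instance_def induced_edges_def)
  then show ?thesis using finite_lists_length_eq[OF f] finite_subset by blast
qed

lemma iv_sub: "S \<in> instances E M \<delta> W \<Longrightarrow> inst_vertices S \<subseteq> W"
  unfolding instances_def is_delta_instance_def induced_edges_def inst_vertices_def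
  by force

lemma inst_mono: "W \<subseteq> W' \<Longrightarrow> instances E M \<delta> W \<subseteq> instances E M \<delta> W'"
proof
  fix S assume "W \<subseteq> W'" "S \<in> instances E M \<delta> W"
  moreover have "induced_edges E W \<subseteq> induced_edges E W'" using \<open>W \<subseteq> W'\<close>
    by (auto simp: induced_edges_def)
  ultimately show "S \<in> instances E M \<delta> W'"
    unfolding instances_def is_delta_instance_def by blast
qed

lemma iv_self: "S \<in> instances E M \<delta> W \<Longrightarrow> S \<in> instances E M \<delta> (inst_vertices S)"
proof -
  assume a: "S \<in> instances E M \<delta> W"
  have "set S \<subseteq> induced_edges E (inst_vertices S)"
  proof
    fix e assume e: "e \<in> set S"
    obtain u v t where et: "e = (u,v,t)" by (cases e) auto
    have "e \<in> E" using inst_sub_E[OF a] e by blast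
    moreover have "u \<in> inst_vertices S" "v \<in> inst_vertices S"
      using e et unfolding inst_vertices_def by force+
    ultimately show "e \<in> induced_edges E (inst_vertices S)"
      using et by (auto simp: induced_edges_def)
  qed
  then show ?thesis using a unfolding instances_def is_delta_instance_def by blast
qed

lemma iv_card: "temporal_motif M k l \<Longrightarrow> S \<in> instances E M \<delta> W \<Longrightarrow> card (inst_vertices S) = k"
  unfolding instances_def is_delta_instance_def temporal_motif_def
  using bij_betw_same_card by blast

lemma iv_eq: "temporal_motif M k l \<Longrightarrow> S \<in> instances E M \<delta> U \<Longrightarrow> card U = k \<Longrightarrow> inst_vertices S = U"
proof -
  assume m: "temporal_motif M k l" and s: "S \<in> instances E M \<delta> U" and c: "card U = k"
  have "k \<ge> 2" using m by (simp add: temporal_motif_def)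
  then have "finite U" using c card.infinite by fastforce
  then show ?thesis using iv_sub[OF s] iv_card[OF m s] c card_subset_eq by metis
qed

lemma tau_decomp:
  assumes m: "temporal_motif M k l" and fE: "finite E" and fV: "finite V" and WV: "W \<subseteq> V"
  shows "tau_set E M \<delta> \<tau> W = (\<Sum>U\<in>{U\<in>H_family V E M \<delta> k. U \<subseteq> W}. tau_set E M \<delta> \<tau> U)"
proof -
  let ?I = "instances E M \<delta>"
  have "tau_set E M \<delta> \<tau> W = (\<Sum>U\<in>inst_vertices ` ?I W. sum \<tau> {S. S \<in> ?I W \<and> inst_vertices S = U})"
    unfolding tau_set_def using sum.image_gen[OF inst_finite[OF fE]] by blast
  also have "inst_vertices ` ?I W = {U\<in>H_family V E M \<delta> k. U \<subseteq> W}"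
  proof
    show "inst_vertices ` ?I W \<subseteq> {U\<in>H_family V E M \<delta> k. U \<subseteq> W}"
    proof
      fix U assume "U \<in> inst_vertices ` ?I W"
      then obtain S where S: "S \<in> ?I W" "U = inst_vertices S" by blast
      then show "U \<in> {U\<in>H_family V E M \<delta> k. U \<subseteq> W}"
        using iv_sub[OF S(1)] iv_card[OF m S(1)] iv_self[OF S(1)] WV
        unfolding H_family_def by blast
    qed
  next
    show "{U\<in>H_family V E M \<delta> k. U \<subseteq> W} \<subseteq> inst_vertices ` ?I W"
    proof
      fix U assume U: "U \<in> {U\<in>H_family V E M \<delta> k. U \<subseteq> W}"
      then obtain S where S: "S \<in> ?I U" unfolding H_family_def by blast
      have "S \<in> ?I W" using inst_mono[of U W] U S by blast
      moreover have "inst_vertices S = U" using iv_eq[OF m S] U unfolding H_family_def by blast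
      ultimately show "U \<in> inst_vertices ` ?I W" by blast
    qed
  qed
  also have "(\<Sum>U\<in>{U\<in>H_family V E M \<delta> k. U \<subseteq> W}. sum \<tau> {S. S \<in> ?I W \<and> inst_vertices S = U})
      = (\<Sum>U\<in>{U\<in>H_family V E M \<delta> k. U \<subseteq> W}. tau_set E M \<delta> \<tau> U)"
  proof (rule sum.cong[OF refl])
    fix U assume U: "U \<in> {U\<in>H_family V E M \<delta> k. U \<subseteq> W}"
    have "{S. S \<in> ?I W \<and> inst_vertices S = U} = ?I U"
    proof
      show "{S. S \<in> ?I W \<and> inst_vertices S = U} \<subseteq> ?I U" using iv_self by blast
      show "?I U \<subseteq> {S. S \<in> ?I W \<and> inst_vertices S = U}"
        using inst_mono[of U W] U iv_eq[OF m] unfolding H_family_def by blast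
    qed
    then show "sum \<tau> {S. S \<in> ?I W \<and> inst_vertices S = U} = tau_set E M \<delta> \<tau> U"
      by (simp add: tau_set_def)
  qed
  finally show ?thesis .
qed



fun gw :: "('v set \<Rightarrow> real) \<Rightarrow> real \<Rightarrow> 'v znode \<times> 'v znode \<Rightarrow> real" where
  "gw tw \<zeta> (Src, XU U) = tw U"
| "gw tw \<zeta> (XU U, Vt v) = tw U"
| "gw tw \<zeta> (Vt v, Sink) = \<zeta>"
| "gw tw \<zeta> _ = 0"

lemma finite_nodes: "finite V \<Longrightarrow> finite H \<Longrightarrow> finite (Z_nodes V H)"
  by (simp add: Z_nodes_def)


lemma lower:
  fixes H :: "'v set set" and tw :: "'v set \<Rightarrow> real"
  assumes finV: "finite V" and HV: "\<forall>U\<in>H. U \<subseteq> V" and finH: "finite H"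
    and nn: "\<forall>U\<in>H. tw U \<ge> 0" and z: "\<zeta> \<ge> 0"
    and cut: "is_sz_cut (Z_nodes V H) C"
  shows "ereal ((\<Sum>U\<in>{U\<in>H. \<not> U \<subseteq> {v\<in>V. Vt v \<in> C}}. tw U) + \<zeta> * real (card {v\<in>V. Vt v \<in> C}))
         \<le> cut_capacity (Z_nodes V H) (Z_arcs V H) (Z_cap tw \<zeta>) C"
proof -
  define N where "N = Z_nodes V H"
  define W where "W = {v\<in>V. Vt v \<in> C}"
  define P where "P = Z_arcs V H \<inter> (C \<times> (N - C))"
  define H1 where "H1 = {U\<in>H. \<not> U \<subseteq> W}"
  define f where "f U = (if XU U \<in> C then (XU U, Vt (SOME v. v \<in> U \<and> Vt v \<notin> C)) else (Src, XU U))" for U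
  have SrcC: "Src \<in> C" and SinkC: "Sink \<notin> C" and CN: "C \<subseteq> N"
    using cut by (auto simp: is_sz_cut_def N_def)
  have finP: "finite P"
  proof (rule finite_subset)
    show "P \<subseteq> N \<times> N" using CN by (auto simp: P_def)
    show "finite (N \<times> N)" using finite_nodes[OF finV finH] by (simp add: N_def)
  qed
  have gnn: "\<forall>a\<in>P. gw tw \<zeta> a \<ge> 0"
    using nn z by (auto simp: P_def Z_arcs_def)
  have gle: "\<forall>a\<in>P. ereal (gw tw \<zeta> a) \<le> Z_cap tw \<zeta> a"
    by (auto simp: P_def Z_arcs_def)
  have fP: "f U \<in> P \<and> gw tw \<zeta> (f U) = tw U" if U: "U \<in> H1" for U
  proof -
    have "\<exists>v. v \<in> U \<and> Vt v \<notin> C" using U HV by (auto simp: H1_def W_def)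
    then have sv: "(SOME v. v \<in> U \<and> Vt v \<notin> C) \<in> U \<and> Vt (SOME v. v \<in> U \<and> Vt v \<notin> C) \<notin> C"
      by (rule someI_ex)
    have UH: "U \<in> H" using U by (simp add: H1_def)
    show ?thesis
    proof (cases "XU U \<in> C")
      case True
      then show ?thesis using sv UH HV by (auto simp: f_def P_def Z_arcs_def N_def Z_nodes_def)
    next
      case False
      then show ?thesis using SrcC UH by (auto simp: f_def P_def Z_arcs_def N_def Z_nodes_def)
    qed
  qed
  have injf: "inj_on f H1"
    by (auto simp: inj_on_def f_def split: if_splits)
  define Q2 :: "('v znode \<times> 'v znode) set" where "Q2 = (\<lambda>v. (Vt v, Sink)) ` W"
  have Q2P: "Q2 \<subseteq> P"
    using SinkC by (auto simp: Q2_def P_def W_def Z_arcs_def N_def Z_nodes_def)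
  have disj: "f ` H1 \<inter> Q2 = {}"
    by (auto simp: f_def Q2_def split: if_splits)
  have finW: "finite W" using finV by (simp add: W_def)
  have finH1: "finite H1" using finH by (simp add: H1_def)
  have s1: "sum (gw tw \<zeta>) (f ` H1) = (\<Sum>U\<in>H1. tw U)"
    using sum.reindex[OF injf, of "gw tw \<zeta>"] fP by simp
  have s2: "sum (gw tw \<zeta>) Q2 = \<zeta> * real (card W)"
    unfolding Q2_def by (subst sum.reindex) (auto simp: inj_on_def)
  have u: "sum (gw tw \<zeta>) (f ` H1 \<union> Q2) = sum (gw tw \<zeta>) (f ` H1) + sum (gw tw \<zeta>) Q2"
    using sum.union_disjoint[OF finite_imageI[OF finH1] finite_imageI[OF finW] disj[unfolded Q2_def]]
    unfolding Q2_def .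
  have "(\<Sum>U\<in>H1. tw U) + \<zeta> * real (card W) = sum (gw tw \<zeta>) (f ` H1 \<union> Q2)"
    unfolding u s1 s2 ..
  also have "\<dots> \<le> sum (gw tw \<zeta>) P"
    using Q2P fP gnn by (intro sum_mono2[OF finP]) auto
  finally have r: "(\<Sum>U\<in>H1. tw U) + \<zeta> * real (card W) \<le> sum (gw tw \<zeta>) P" .
  have "ereal (sum (gw tw \<zeta>) P) = (\<Sum>a\<in>P. ereal (gw tw \<zeta> a))" by simp
  also have "\<dots> \<le> sum (Z_cap tw \<zeta>) P" using gle by (intro sum_mono) auto
  finally show ?thesis using r unfolding cut_capacity_def P_def N_def H1_def W_def
    by (meson ereal_less_eq(3) order_trans)
qed

lemma exact:
  fixes H :: "'v set set" and tw :: "'v set \<Rightarrow> real"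
  assumes finV: "finite V" and HV: "\<forall>U\<in>H. U \<subseteq> V" and finH: "finite H" and WV: "W \<subseteq> V"
  shows "is_sz_cut (Z_nodes V H) (insert Src (XU ` {U\<in>H. U \<subseteq> W} \<union> Vt ` W))"
    and "cut_capacity (Z_nodes V H) (Z_arcs V H) (Z_cap tw \<zeta>) (insert Src (XU ` {U\<in>H. U \<subseteq> W} \<union> Vt ` W))
       = ereal ((\<Sum>U\<in>{U\<in>H. \<not> U \<subseteq> W}. tw U) + \<zeta> * real (card W))"
proof -
  define CW where "CW = insert Src (XU ` {U\<in>H. U \<subseteq> W} \<union> Vt ` W)"
  show "is_sz_cut (Z_nodes V H) (insert Src (XU ` {U\<in>H. U \<subseteq> W} \<union> Vt ` W))"
    using WV by (auto simp: is_sz_cut_def Z_nodes_def)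
  have P: "Z_arcs V H \<inter> (CW \<times> (Z_nodes V H - CW)) =
     (\<lambda>U. (Src, XU U)) ` {U\<in>H. \<not> U \<subseteq> W} \<union> (\<lambda>v. (Vt v, Sink)) ` W"
    using WV by (auto simp: CW_def Z_arcs_def Z_nodes_def)
  have finW: "finite W" using finV WV finite_subset by blast
  have finH1: "finite {U\<in>H. \<not> U \<subseteq> W}" using finH by simp
  have "cut_capacity (Z_nodes V H) (Z_arcs V H) (Z_cap tw \<zeta>) CW =
     sum (Z_cap tw \<zeta>) ((\<lambda>U. (Src, XU U)) ` {U\<in>H. \<not> U \<subseteq> W}) + sum (Z_cap tw \<zeta>) ((\<lambda>v. (Vt v, Sink)) ` W)"
    unfolding cut_capacity_def P
    by (rule sum.union_disjoint) (use finW finH1 in auto)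
  also have "\<dots> = (\<Sum>U\<in>{U\<in>H. \<not> U \<subseteq> W}. ereal (tw U)) + (\<Sum>v\<in>W. ereal \<zeta>)"
    by (subst sum.reindex, simp add: inj_on_def)+ simp
  also have "\<dots> = ereal ((\<Sum>U\<in>{U\<in>H. \<not> U \<subseteq> W}. tw U) + \<zeta> * real (card W))"
    by (simp add: mult.commute)
  finally show "cut_capacity (Z_nodes V H) (Z_arcs V H) (Z_cap tw \<zeta>) (insert Src (XU ` {U\<in>H. U \<subseteq> W} \<union> Vt ` W))
       = ereal ((\<Sum>U\<in>{U\<in>H. \<not> U \<subseteq> W}. tw U) + \<zeta> * real (card W))" unfolding CW_def .
qed

theorem lemmaF1:
  fixes V :: "'v set" and E :: "'v tedge set" and M :: "('m \<times> 'm) list"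
    and k l :: nat and \<delta> \<zeta> :: real and \<tau> :: "'v tedge list \<Rightarrow> real"
    and C :: "'v znode set"
  assumes "temporal_network V E"
    and "V \<noteq> {}"
    and "temporal_motif M k l"
    and "\<delta> > 0"
    and "\<forall>S\<in>instances E M \<delta> V. \<tau> S > 0"
    and "\<zeta> \<ge> 0"
    and "is_min_cut (Z_nodes V (H_family V E M \<delta> k)) (Z_arcs V (H_family V E M \<delta> k))
           (Z_cap (tau_set E M \<delta> \<tau>) \<zeta>) C"
  shows "(C \<inter> Vt ` V \<noteq> {} \<longrightarrow> \<zeta> \<le> OPT V E M \<delta> \<tau>) \<and>
         (C \<inter> Vt ` V = {} \<longrightarrow> \<zeta> \<ge> OPT V E M \<delta> \<tau>)"
proof -
  note tn = assms(1) and m = assms(3) and tpos = assms(5) and z = assms(6) and mc = assms(7)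
  define H where "H = H_family V E M \<delta> k"
  define tw where "tw = tau_set E M \<delta> \<tau>"
  define N where "N = Z_nodes V H"
  define A where "A = Z_arcs V H"
  define cap where "cap = Z_cap tw \<zeta>"
  define R where "R W = (\<Sum>U\<in>{U\<in>H. \<not> U \<subseteq> W}. tw U)" for W
  define CW where "CW W = insert Src (XU ` {U\<in>H. U \<subseteq> W} \<union> Vt ` W)" for W
  have finV: "finite V" and finE: "finite E" using tn by (auto simp: temporal_network_def)
  have HV: "\<forall>U\<in>H. U \<subseteq> V" by (auto simp: H_def H_family_def)
  have finH: "finite H" using HV finV by (meson Pow_iff finite_Pow_iff finite_subset subsetI)
  have nn: "\<forall>U\<in>H. tw U \<ge> 0"
  proof
    fix U assume "U \<in> H"
    then have "instances E M \<delta> U \<subseteq> instances E M \<delta> V" using HV inst_mono by blast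
    then show "tw U \<ge> 0" unfolding tw_def tau_set_def using tpos
      by (intro sum_nonneg) (auto intro: less_imp_le)
  qed
  have dec: "tw W = (\<Sum>U\<in>{U\<in>H. U \<subseteq> W}. tw U)" if "W \<subseteq> V" for W
    unfolding tw_def H_def using tau_decomp[OF m finE finV that] .
  have RW: "R W = tw V - tw W" if "W \<subseteq> V" for W
  proof -
    have "{U\<in>H. U \<subseteq> V} = H" using HV by auto
    then have "tw V = (\<Sum>U\<in>H. tw U)" using dec[of V] by simp
    also have "\<dots> = (\<Sum>U\<in>{U\<in>H. U \<subseteq> W}. tw U) + R W"
    proof -
      have sp: "H = {U\<in>H. U \<subseteq> W} \<union> {U\<in>H. \<not> U \<subseteq> W}" by blast
      have "sum tw ({U\<in>H. U \<subseteq> W} \<union> {U\<in>H. \<not> U \<subseteq> W}) = sum tw {U\<in>H. U \<subseteq> W} + sum tw {U\<in>H. \<not> U \<subseteq> W}"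
        by (rule sum.union_disjoint) (use finH in auto)
      then show ?thesis unfolding R_def using sp by metis
    qed
    finally show ?thesis using dec[OF that] by simp
  qed
  have cutC: "is_sz_cut N C" and minC: "\<And>C'. is_sz_cut N C' \<Longrightarrow> cut_capacity N A cap C \<le> cut_capacity N A cap C'"
    using mc unfolding is_min_cut_def N_def A_def cap_def H_def tw_def by blast+
  define W0 where "W0 = {v\<in>V. Vt v \<in> C}"
  have W0V: "W0 \<subseteq> V" by (auto simp: W0_def)
  have low: "ereal (R W0 + \<zeta> * real (card W0)) \<le> cut_capacity N A cap C"
    using lower[OF finV HV finH nn z cutC[unfolded N_def]] unfolding R_def W0_def N_def A_def cap_def .
  have up: "cut_capacity N A cap C \<le> ereal (R W + \<zeta> * real (card W))" if "W \<subseteq> V" for W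
  proof -
    have "cut_capacity N A cap C \<le> cut_capacity N A cap (CW W)"
      using minC exact(1)[OF finV HV finH that] unfolding CW_def N_def by blast
    also have "\<dots> = ereal (R W + \<zeta> * real (card W))"
      using exact(2)[OF finV HV finH that, of tw \<zeta>] unfolding CW_def N_def A_def cap_def R_def .
    finally show ?thesis .
  qed
  have key: "R W0 + \<zeta> * real (card W0) \<le> R W + \<zeta> * real (card W)" if "W \<subseteq> V" for W
  proof -
    have "ereal (R W0 + \<zeta> * real (card W0)) \<le> ereal (R W + \<zeta> * real (card W))"
      using low up[OF that] by (rule order_trans)
    then show ?thesis by (simp only: ereal_less_eq(3))
  qed
  have tw0: "tw {} = 0"
  proof -
    have "{U\<in>H. U \<subseteq> {}} = {}"
    proof -
      have "k \<ge> 2" using m unfolding temporal_motif_def by blast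
      show ?thesis
      proof (rule equals0I)
        fix U assume U: "U \<in> {U\<in>H. U \<subseteq> {}}"
        then have "U \<in> H" "U = {}" by blast+
        then have "card U = k" "U = {}" unfolding H_def H_family_def by blast+
        then show False using \<open>k \<ge> 2\<close> by simp
      qed
    qed
    moreover have "tw {} = (\<Sum>U\<in>{U\<in>H. U \<subseteq> {}}. tw U)" using dec[of "{}"] by blast
    ultimately show ?thesis by (simp only: sum.empty)
  qed
  define D where "D = {density E M \<delta> \<tau> W | W. W \<subseteq> V \<and> W \<noteq> {}}"
  have Dimg: "D = density E M \<delta> \<tau> ` {W. W \<subseteq> V \<and> W \<noteq> {}}" unfolding D_def by blast
  have finD: "finite D" unfolding Dimg
  proof (rule finite_imageI)
    show "finite {W. W \<subseteq> V \<and> W \<noteq> {}}"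
      by (rule finite_subset[of _ "Pow V"]) (use finV in auto)
  qed
  have neD: "D \<noteq> {}" unfolding Dimg using assms(2) by blast
  have OPTD: "OPT V E M \<delta> \<tau> = Max D" by (simp add: OPT_def D_def)
  have dens: "density E M \<delta> \<tau> W = tw W / real (card W)" for W
    by (simp add: density_def tw_def)
  show ?thesis
  proof (intro conjI impI)
    assume "C \<inter> Vt ` V \<noteq> {}"
    then have ne: "W0 \<noteq> {}" by (auto simp: W0_def)
    have cpos: "real (card W0) > 0" using ne W0V finV by (simp add: card_gt_0_iff finite_subset)
    have "R W0 + \<zeta> * real (card W0) \<le> R {} + \<zeta> * real (card ({}::'v set))" using key by blast
    then have "\<zeta> * real (card W0) \<le> tw W0" using RW[OF W0V] RW[of "{}"] tw0 by simp
    then have "\<zeta> \<le> density E M \<delta> \<tau> W0" unfolding dens using cpos by (simp add: pos_le_divide_eq)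
    also have "\<dots> \<le> Max D" using finD ne W0V unfolding Dimg by (intro Max_ge imageI) auto
    finally show "\<zeta> \<le> OPT V E M \<delta> \<tau>" using OPTD by simp
  next
    assume "C \<inter> Vt ` V = {}"
    then have e: "W0 = {}" by (auto simp: W0_def)
    have "\<forall>d\<in>D. d \<le> \<zeta>"
    proof
      fix d assume "d \<in> D"
      then obtain W where W: "W \<subseteq> V" "W \<noteq> {}" "d = density E M \<delta> \<tau> W" by (auto simp: D_def)
      have cpos: "real (card W) > 0" using W finV by (simp add: card_gt_0_iff finite_subset)
      have "R {} \<le> R W + \<zeta> * real (card W)" using key[OF W(1)] e by simp
      then have "tw W \<le> \<zeta> * real (card W)" using RW[OF W(1)] RW[of "{}"] tw0 by simp
      then show "d \<le> \<zeta>" unfolding W(3) dens using cpos by (simp add: pos_divide_le_eq)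
    qed
    then show "OPT V E M \<delta> \<tau> \<le> \<zeta>" unfolding OPTD using finD neD Max.boundedI by blast
  qed
qed

end
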